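(* Let $d$ be even, let $n>2d$ be prime, let $\omega=e^{2\pi i/n}$, let $T$ be a $d\times d$ Cauchy matrix over $\mathbb{F}_n$, and let $(W_T)_{(i_1,\dots,i_d),(j_1,\dots,j_d)}=\omega^{(i_1,\dots,i_d)\,T\,(j_1,\dots,j_d)^\top}$. For every $\lambda\subseteq[d]$, the $n^{2|\lambda|}\times n^{2(d-|\lambda|)}$ matrix $W_T^{[\lambda]}$ defined by $(W_T^{[\lambda]})_{(i_\lambda,j_\lambda),(i_{\lambda^c},j_{\lambda^c})}=(W_T)_{(i_1,\dots,i_d),(j_1,\dots,j_d)}$ (where $\lambda^c=[d]\setminus\lambda$ and $i_\lambda$ denotes the subtuple of coordinates in $\lambda$) satisfies $\mathrm{rank}(W_T^{[\lambda]})=n^{2\min\{|\lambda|,\,d-|\lambda|\}}$.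
   Context: A Cauchy matrix over $\mathbb{F}_n$ is $T_{ab}=1/(x_a-y_b)$ for pairwise distinct $x_1,\dots,x_d,y_1,\dots,y_d\in\mathbb{F}_n$; every square submatrix of it is nonsingular. Indices in $[n]$ are regarded as elements of $\mathbb{F}_n$ and the exponent is computed in $\mathbb{F}_n$. *)

theory Defs
  imports "HOL-Analysis.Analysis" "HOL-Library.Function_Algebras" "HOL-Number_Theory.Number_Theory"
begin

text \<open>Elements of the prime field F_n are represented by integers in {0..<n};
  indices in [d] are 0..d-1 (only used as positions), indices in [n] are 0..n-1.\<close>

definition cauchy_matrix :: "nat \<Rightarrow> nat \<Rightarrow> (nat \<Rightarrow> nat \<Rightarrow> int) \<Rightarrow> bool" where
  "cauchy_matrix n d T \<longleftrightarrow>
     (\<exists>x y :: nat \<Rightarrow> int.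
        (\<forall>a<d. x a \<in> {0..<int n} \<and> y a \<in> {0..<int n}) \<and>
        inj_on x {0..<d} \<and> inj_on y {0..<d} \<and> x ` {0..<d} \<inter> y ` {0..<d} = {} \<and>
        (\<forall>a<d. \<forall>b<d. T a b \<in> {0..<int n} \<and> [T a b * (x a - y b) = 1] (mod int n)))"

definition W_T :: "nat \<Rightarrow> nat \<Rightarrow> (nat \<Rightarrow> nat \<Rightarrow> int) \<Rightarrow> (nat \<Rightarrow> nat) \<Rightarrow> (nat \<Rightarrow> nat) \<Rightarrow> complex" where
  "W_T n d T i j = cis (2 * pi / real n) ^
      nat ((\<Sum>a<d. \<Sum>b<d. int (i a) * T a b * int (j b)) mod int n)"

definition glue :: "nat set \<Rightarrow> (nat \<Rightarrow> nat) \<Rightarrow> (nat \<Rightarrow> nat) \<Rightarrow> nat \<Rightarrow> nat" where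
  "glue L u v = (\<lambda>a. if a \<in> L then u a else v a)"

text \<open>The reshaped matrix W_T^[\<lambda>]: rows (i_\<lambda>, j_\<lambda>), columns (i_\<lambda>c, j_\<lambda>c).\<close>
definition W_resh :: "nat \<Rightarrow> nat \<Rightarrow> (nat \<Rightarrow> nat \<Rightarrow> int) \<Rightarrow> nat set
    \<Rightarrow> (nat \<Rightarrow> nat) \<times> (nat \<Rightarrow> nat) \<Rightarrow> (nat \<Rightarrow> nat) \<times> (nat \<Rightarrow> nat) \<Rightarrow> complex" where
  "W_resh n d T L r c = W_T n d T (glue L (fst r) (fst c)) (glue L (snd r) (snd c))"

definition tuple_pairs :: "nat \<Rightarrow> nat set \<Rightarrow> ((nat \<Rightarrow> nat) \<times> (nat \<Rightarrow> nat)) set" where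
  "tuple_pairs n S = (S \<rightarrow>\<^sub>E {..<n}) \<times> (S \<rightarrow>\<^sub>E {..<n})"

text \<open>Rank over the complex numbers of a matrix with row index set R and column index
  set C: dimension of the complex span of its columns (column vectors as functions R -> C,
  extended by 0).\<close>
definition mat_rank :: "'r set \<Rightarrow> 'c set \<Rightarrow> ('r \<Rightarrow> 'c \<Rightarrow> complex) \<Rightarrow> nat" where
  "mat_rank R C M =
     vector_space.dim (\<lambda>(s::complex) (f::'r \<Rightarrow> complex). \<lambda>r. s * f r)
       ((\<lambda>c. \<lambda>r. if r \<in> R then M r c else 0) ` C)"

end

theory Submission
  imports Defs
begin

lemma cauchy_step_cong:
  fixes p g h k D ua ua0 vb vb0 :: int
  assumes "[g * (ua - vb) = 1] (mod p)" "[h * (ua - vb0) = 1] (mod p)"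
    "[k * (ua0 - vb) = 1] (mod p)" "D = ua0 - vb0"
  shows "[g - D * h * k = (ua - ua0) * h * (g * ((vb0 - vb) * k))] (mod p)"
proof -
  have e1: "[g * (h * (ua - vb0)) * (k * (ua0 - vb)) = g * 1 * 1] (mod p)"
    using assms by (intro cong_mult cong_refl) auto
  have e2: "[D * h * k * (g * (ua - vb)) = D * h * k * 1] (mod p)"
    using assms by (intro cong_mult cong_refl) auto
  have "[g * (h * (ua - vb0)) * (k * (ua0 - vb)) - D * h * k * (g * (ua - vb)) = g - D * h * k] (mod p)"
    using cong_diff[OF e1 e2] by simp
  moreover have "g * (h * (ua - vb0)) * (k * (ua0 - vb)) - D * h * k * (g * (ua - vb))
     = (ua - ua0) * h * (g * ((vb0 - vb) * k))"
    unfolding assms(4) by (simp add: algebra_simps)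
  ultimately show ?thesis by (metis cong_sym)
qed

lemma cauchy_inj:
  fixes p :: int and G :: "nat \<Rightarrow> nat \<Rightarrow> int" and u v :: "nat \<Rightarrow> int"
  assumes p: "prime p" and fC: "finite C"
    and uinj: "\<forall>a\<in>R. \<forall>a'\<in>R. [u a = u a'] (mod p) \<longrightarrow> a = a'"
    and vinj: "\<forall>b\<in>C. \<forall>b'\<in>C. [v b = v b'] (mod p) \<longrightarrow> b = b'"
    and G: "\<forall>a\<in>R. \<forall>b\<in>C. [G a b * (u a - v b) = 1] (mod p)"
  shows "finite R \<Longrightarrow> card C \<le> card R \<Longrightarrow> \<forall>a\<in>R. [(\<Sum>b\<in>C. G a b * c b) = 0] (mod p)
     \<Longrightarrow> \<forall>b\<in>C. [c b = 0] (mod p)"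
  using fC vinj G uinj
proof (induction C arbitrary: R c rule: finite_induct)
  case empty
  then show ?case by simp
next
  case (insert b0 C' R c)
  have vi: "\<forall>b\<in>insert b0 C'. \<forall>b'\<in>insert b0 C'. [v b = v b'] (mod p) \<longrightarrow> b = b'"
    by (fact insert.prems)
  have Gi: "\<forall>a\<in>R. \<forall>b\<in>insert b0 C'. [G a b * (u a - v b) = 1] (mod p)"
    by (fact insert.prems)
  have ui: "\<forall>a\<in>R. \<forall>a'\<in>R. [u a = u a'] (mod p) \<longrightarrow> a = a'"
    by (fact insert.prems)
  have fR: "finite R" by (fact insert.prems)
  have cR: "card (insert b0 C') \<le> card R" by (fact insert.prems)
  have SR: "\<forall>a\<in>R. [(\<Sum>b\<in>insert b0 C'. G a b * c b) = 0] (mod p)" by (fact insert.prems)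
  have nd: "\<not> p dvd G a b" if "a \<in> R" "b \<in> insert b0 C'" for a b
  proof
    assume "p dvd G a b"
    then have "[G a b * (u a - v b) = 0] (mod p)" by (simp add: cong_0_iff)
    moreover have "[G a b * (u a - v b) = 1] (mod p)" using Gi that by blast
    ultimately have "[1 = 0] (mod p)" by (meson cong_sym cong_trans)
    then have "p dvd 1" by (simp add: cong_0_iff)
    then show False using p not_prime_unit by blast
  qed
  have "card C' < card R" using cR insert.hyps by simp
  then obtain a0 where a0: "a0 \<in> R" by fastforce
  define R' where "R' = R - {a0}"
  have fR': "finite R'" using insert R'_def by simp
  have cR': "card C' \<le> card R'" using \<open>card C' < card R\<close> a0 fR R'_def by simp
  define c' where "c' b = c b * ((v b0 - v b) * G a0 b)" for b
  have S0: "[(\<Sum>b\<in>insert b0 C'. G a b * c b) = 0] (mod p)" if "a \<in> R" for a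
    using SR that by blast
  have Ssum: "\<forall>a\<in>R'. [(\<Sum>b\<in>C'. G a b * c' b) = 0] (mod p)"
  proof
    fix a assume aR': "a \<in> R'"
    then have aR: "a \<in> R" and ane: "a \<noteq> a0" by (auto simp: R'_def)
    define D where "D = u a0 - v b0"
    define h where "h = G a b0"
    have t0: "[G a b0 * c b0 - D * h * (G a0 b0 * c b0) = 0] (mod p)"
    proof -
      have "[G a0 b0 * D = 1] (mod p)" using Gi a0 unfolding D_def by blast
      then have "[h * c b0 * (G a0 b0 * D) = h * c b0 * 1] (mod p)" by (intro cong_mult cong_refl)
      then have "[h * c b0 - h * c b0 * (G a0 b0 * D) = h * c b0 - h * c b0 * 1] (mod p)"
        by (intro cong_diff cong_refl)
      moreover have "h * c b0 - h * c b0 * (G a0 b0 * D) = G a b0 * c b0 - D * h * (G a0 b0 * c b0)"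
        unfolding h_def by (simp add: algebra_simps)
      ultimately show ?thesis by simp
    qed
    have tb: "[G a b * c b - D * h * (G a0 b * c b) = (u a - u a0) * h * (G a b * c' b)] (mod p)"
      if "b \<in> C'" for b
    proof -
      have "[G a b - D * h * G a0 b = (u a - u a0) * h * (G a b * ((v b0 - v b) * G a0 b))] (mod p)"
        apply (rule cauchy_step_cong)
        using Gi aR a0 that unfolding h_def D_def by auto
      then have "[(G a b - D * h * G a0 b) * c b = (u a - u a0) * h * (G a b * ((v b0 - v b) * G a0 b)) * c b] (mod p)"
        by (intro cong_mult cong_refl)
      then show ?thesis unfolding c'_def by (simp add: algebra_simps)
    qed
    have "[(\<Sum>b\<in>insert b0 C'. G a b * c b) - D * h * (\<Sum>b\<in>insert b0 C'. G a0 b * c b) = 0 - D * h * 0] (mod p)"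
      by (intro cong_diff cong_mult cong_refl S0 aR a0)
    then have A: "[(\<Sum>b\<in>insert b0 C'. G a b * c b - D * h * (G a0 b * c b)) = 0] (mod p)"
      by (simp add: sum_subtractf sum_distrib_left)
    have "(\<Sum>b\<in>insert b0 C'. G a b * c b - D * h * (G a0 b * c b))
      = (G a b0 * c b0 - D * h * (G a0 b0 * c b0)) + (\<Sum>b\<in>C'. G a b * c b - D * h * (G a0 b * c b))"
      using insert.hyps by simp
    moreover have "[(G a b0 * c b0 - D * h * (G a0 b0 * c b0)) + (\<Sum>b\<in>C'. G a b * c b - D * h * (G a0 b * c b))
       = 0 + (\<Sum>b\<in>C'. (u a - u a0) * h * (G a b * c' b))] (mod p)"
      by (intro cong_add t0 cong_sum tb)
    ultimately have "[(\<Sum>b\<in>insert b0 C'. G a b * c b - D * h * (G a0 b * c b))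
       = (\<Sum>b\<in>C'. (u a - u a0) * h * (G a b * c' b))] (mod p)" by simp
    then have "[(\<Sum>b\<in>C'. (u a - u a0) * h * (G a b * c' b)) = 0] (mod p)"
      using A by (meson cong_sym cong_trans)
    then have "p dvd ((u a - u a0) * h) * (\<Sum>b\<in>C'. G a b * c' b)"
      by (simp add: cong_0_iff sum_distrib_left)
    moreover have "\<not> p dvd (u a - u a0)"
      using ui aR a0 ane unfolding cong_iff_dvd_diff by blast
    moreover have "\<not> p dvd h" unfolding h_def using nd aR by simp
    ultimately show "[(\<Sum>b\<in>C'. G a b * c' b) = 0] (mod p)"
      using p by (simp add: cong_0_iff prime_dvd_mult_iff)
  qed
  have IH: "\<forall>b\<in>C'. [c' b = 0] (mod p)"
  proof (rule insert.IH[of R' c'])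
    show "\<forall>b\<in>C'. \<forall>b'\<in>C'. [v b = v b'] (mod p) \<longrightarrow> b = b'" using vi by blast
    show "\<forall>a\<in>R'. \<forall>b\<in>C'. [G a b * (u a - v b) = 1] (mod p)" using Gi R'_def by blast
    show "\<forall>a\<in>R'. \<forall>a'\<in>R'. [u a = u a'] (mod p) \<longrightarrow> a = a'" using ui R'_def by blast
    show "finite R'" by (rule fR')
    show "card C' \<le> card R'" by (rule cR')
    show "\<forall>a\<in>R'. [(\<Sum>b\<in>C'. G a b * c' b) = 0] (mod p)" by (rule Ssum)
  qed
  have C'0: "[c b = 0] (mod p)" if "b \<in> C'" for b
  proof -
    have "p dvd c b * ((v b0 - v b) * G a0 b)" using IH that by (simp add: c'_def cong_0_iff)
    moreover have "\<not> p dvd (v b0 - v b)" using vi insert.hyps that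
      unfolding cong_iff_dvd_diff by blast
    moreover have "\<not> p dvd G a0 b" using nd a0 that by simp
    ultimately show ?thesis using p by (simp add: cong_0_iff prime_dvd_mult_iff)
  qed
  have "[(\<Sum>b\<in>insert b0 C'. G a0 b * c b) = G a0 b0 * c b0 + (\<Sum>b\<in>C'. G a0 b * 0)] (mod p)"
    using insert.hyps by (simp del: mult_zero_right) (intro cong_add cong_refl cong_sum cong_mult C'0)
  then have "[(\<Sum>b\<in>insert b0 C'. G a0 b * c b) = G a0 b0 * c b0] (mod p)" by simp
  then have "[G a0 b0 * c b0 = 0] (mod p)" using S0[OF a0] by (meson cong_sym cong_trans)
  then have "[c b0 = 0] (mod p)" using nd[OF a0] p by (simp add: cong_0_iff prime_dvd_mult_iff)
  then show ?case using C'0 by simp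
qed

lemma cauchy_inj_nat:
  fixes n :: nat and G :: "nat \<Rightarrow> nat \<Rightarrow> int" and u v :: "nat \<Rightarrow> int" and ca cb :: "nat \<Rightarrow> nat"
  assumes p: "prime n" and fR: "finite R" and fS: "finite S" and cS: "card S \<le> card R"
    and uinj: "\<forall>a\<in>R. \<forall>a'\<in>R. [u a = u a'] (mod int n) \<longrightarrow> a = a'"
    and vinj: "\<forall>b\<in>S. \<forall>b'\<in>S. [v b = v b'] (mod int n) \<longrightarrow> b = b'"
    and G: "\<forall>a\<in>R. \<forall>b\<in>S. [G a b * (u a - v b) = 1] (mod int n)"
    and ca: "\<forall>b\<in>S. ca b < n" and cb: "\<forall>b\<in>S. cb b < n"
    and eq: "\<forall>a\<in>R. (\<Sum>b\<in>S. G a b * int (ca b)) mod int n = (\<Sum>b\<in>S. G a b * int (cb b)) mod int n"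
  shows "\<forall>b\<in>S. ca b = cb b"
proof -
  have pi: "prime (int n)" using p by simp
  have "\<forall>a\<in>R. [(\<Sum>b\<in>S. G a b * (int (ca b) - int (cb b))) = 0] (mod int n)"
  proof
    fix a assume a: "a \<in> R"
    have "[(\<Sum>b\<in>S. G a b * int (ca b)) = (\<Sum>b\<in>S. G a b * int (cb b))] (mod int n)"
      using eq a by (simp add: cong_def)
    then have "[(\<Sum>b\<in>S. G a b * int (ca b)) - (\<Sum>b\<in>S. G a b * int (cb b))
       = (\<Sum>b\<in>S. G a b * int (cb b)) - (\<Sum>b\<in>S. G a b * int (cb b))] (mod int n)"
      by (intro cong_diff cong_refl)
    then show "[(\<Sum>b\<in>S. G a b * (int (ca b) - int (cb b))) = 0] (mod int n)"
      by (simp add: algebra_simps sum_subtractf)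
  qed
  then have "\<forall>b\<in>S. [int (ca b) - int (cb b) = 0] (mod int n)"
    using cauchy_inj[OF pi fS uinj vinj G fR cS, where c = "\<lambda>b. int (ca b) - int (cb b)"] by simp
  then show ?thesis
  proof (intro ballI)
    fix b assume "\<forall>b\<in>S. [int (ca b) - int (cb b) = 0] (mod int n)" "b \<in> S"
    then have "[int (ca b) = int (cb b)] (mod int n)"
      by (simp add: cong_iff_dvd_diff cong_0_iff dvd_diff_commute)
    then have "int (ca b) mod int n = int (cb b) mod int n" by (simp add: cong_def)
    moreover have "int (ca b) mod int n = int (ca b)" "int (cb b) mod int n = int (cb b)"
      using ca cb \<open>b \<in> S\<close> by auto
    ultimately show "ca b = cb b" by simp
  qed
qed

lemma card_PiE_const: "finite A \<Longrightarrow> card (A \<rightarrow>\<^sub>E B) = card B ^ card A"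
  by (simp add: card_PiE)

lemma image_card:
  fixes n :: nat and G :: "nat \<Rightarrow> nat \<Rightarrow> int" and u v :: "nat \<Rightarrow> int"
  assumes p: "prime n" and fR: "finite R" and fC: "finite C"
    and uinj: "\<forall>a\<in>R. \<forall>a'\<in>R. [u a = u a'] (mod int n) \<longrightarrow> a = a'"
    and vinj: "\<forall>b\<in>C. \<forall>b'\<in>C. [v b = v b'] (mod int n) \<longrightarrow> b = b'"
    and G: "\<forall>a\<in>R. \<forall>b\<in>C. [G a b * (u a - v b) = 1] (mod int n)"
  shows "card ((\<lambda>c. restrict (\<lambda>a. (\<Sum>b\<in>C. G a b * int (c b)) mod int n) R) ` (C \<rightarrow>\<^sub>E {..<n}))
     = n ^ min (card R) (card C)"
proof -
  define F where "F = (\<lambda>c::nat\<Rightarrow>nat. restrict (\<lambda>a. (\<Sum>b\<in>C. G a b * int (c b)) mod int n) R)"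
  have n0: "n > 0" using p prime_gt_0_nat by blast
  have Fsub: "F ` (C \<rightarrow>\<^sub>E {..<n}) \<subseteq> R \<rightarrow>\<^sub>E {0..<int n}"
    unfolding F_def using n0 by (auto simp: PiE_def extensional_def)
  have cardT: "card (R \<rightarrow>\<^sub>E {0..<int n}) = n ^ card R"
    using fR by (simp add: card_PiE_const)
  show ?thesis
  proof (cases "card C \<le> card R")
    case True
    have "inj_on F (C \<rightarrow>\<^sub>E {..<n})"
    proof (rule inj_onI)
      fix c1 c2 assume c1: "c1 \<in> C \<rightarrow>\<^sub>E {..<n}" and c2: "c2 \<in> C \<rightarrow>\<^sub>E {..<n}" and e: "F c1 = F c2"
      have "\<forall>a\<in>R. (\<Sum>b\<in>C. G a b * int (c1 b)) mod int n = (\<Sum>b\<in>C. G a b * int (c2 b)) mod int n"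
      proof
        fix a assume "a \<in> R"
        then show "(\<Sum>b\<in>C. G a b * int (c1 b)) mod int n = (\<Sum>b\<in>C. G a b * int (c2 b)) mod int n"
          using fun_cong[OF e, of a] unfolding F_def by simp
      qed
      moreover have "\<forall>b\<in>C. c1 b < n" "\<forall>b\<in>C. c2 b < n" using c1 c2 by auto
      ultimately have "\<forall>b\<in>C. c1 b = c2 b"
        using cauchy_inj_nat[OF p fR fC True uinj vinj G, where ca=c1 and cb=c2] by blast
      then show "c1 = c2" using c1 c2 by (auto intro: PiE_ext)
    qed
    then have "card (F ` (C \<rightarrow>\<^sub>E {..<n})) = n ^ card C"
      using fC by (simp add: card_image card_PiE_const)
    then show ?thesis using True unfolding F_def by (simp add: min_def)
  next
    case False
    then obtain S where S: "S \<subseteq> C" "card S = card R" "finite S"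
      by (metis nat_le_linear obtain_subset_with_card_n)
    define ext where "ext = (\<lambda>c::nat\<Rightarrow>nat. \<lambda>b. if b \<in> S then c b else if b \<in> C then 0 else undefined)"
    have ext_in: "ext c \<in> C \<rightarrow>\<^sub>E {..<n}" if "c \<in> S \<rightarrow>\<^sub>E {..<n}" for c
      using that n0 S(1) unfolding ext_def by (auto simp: PiE_def extensional_def)
    have sumext: "(\<Sum>b\<in>C. G a b * int (ext c b)) = (\<Sum>b\<in>S. G a b * int (c b))" for a c
      by (rule sum.mono_neutral_cong_right) (use fC S in \<open>auto simp: ext_def\<close>)
    have "inj_on (F \<circ> ext) (S \<rightarrow>\<^sub>E {..<n})"
    proof (rule inj_onI)
      fix c1 c2 assume c1: "c1 \<in> S \<rightarrow>\<^sub>E {..<n}" and c2: "c2 \<in> S \<rightarrow>\<^sub>E {..<n}" and e: "(F \<circ> ext) c1 = (F \<circ> ext) c2"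
      have "\<forall>a\<in>R. (\<Sum>b\<in>S. G a b * int (c1 b)) mod int n = (\<Sum>b\<in>S. G a b * int (c2 b)) mod int n"
      proof
        fix a assume "a \<in> R"
        then show "(\<Sum>b\<in>S. G a b * int (c1 b)) mod int n = (\<Sum>b\<in>S. G a b * int (c2 b)) mod int n"
          using fun_cong[OF e, of a] unfolding F_def by (simp add: sumext)
      qed
      moreover have "\<forall>b\<in>S. \<forall>b'\<in>S. [v b = v b'] (mod int n) \<longrightarrow> b = b'" using vinj S by blast
      moreover have "\<forall>a\<in>R. \<forall>b\<in>S. [G a b * (u a - v b) = 1] (mod int n)" using G S by blast
      moreover have "\<forall>b\<in>S. c1 b < n" "\<forall>b\<in>S. c2 b < n" using c1 c2 by auto
      moreover have "card S \<le> card R" using S(2) by simp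
      ultimately have "\<forall>b\<in>S. c1 b = c2 b"
        using cauchy_inj_nat[OF p fR S(3) _ uinj, where ca=c1 and cb=c2] by blast
      then show "c1 = c2" using c1 c2 by (auto intro: PiE_ext)
    qed
    then have cI: "card ((F \<circ> ext) ` (S \<rightarrow>\<^sub>E {..<n})) = n ^ card R"
      using S card_image[of "F \<circ> ext" "S \<rightarrow>\<^sub>E {..<n}"] by (simp add: card_PiE_const)
    have "(F \<circ> ext) ` (S \<rightarrow>\<^sub>E {..<n}) \<subseteq> F ` (C \<rightarrow>\<^sub>E {..<n})"
      using ext_in by auto
    then have "n ^ card R \<le> card (F ` (C \<rightarrow>\<^sub>E {..<n}))"
      using cI card_mono[OF finite_subset[OF Fsub]] fR by (metis card_mono finite_PiE finite_atLeastLessThan_int finite_subset Fsub)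
    moreover have "card (F ` (C \<rightarrow>\<^sub>E {..<n})) \<le> n ^ card R"
      using card_mono[OF _ Fsub] fR cardT by (simp add: finite_PiE)
    ultimately show ?thesis using False unfolding F_def by (simp add: min_def)
  qed
qed


definition zeta :: "nat \<Rightarrow> int \<Rightarrow> complex" where
  "zeta n z = cis (2 * pi * of_int z / real n)"

lemma zeta_add: "zeta n (a + b) = zeta n a * zeta n b"
  unfolding zeta_def cis_mult by (simp add: add_divide_distrib distrib_left)

lemma zeta_0[simp]: "zeta n 0 = 1"
  unfolding zeta_def by simp

lemma zeta_sum: "zeta n (\<Sum>i\<in>A. f i) = (\<Prod>i\<in>A. zeta n (f i))"
proof (cases "finite A")
  case True then show ?thesis by (induction A rule: finite_induct) (auto simp: zeta_add)
qed simp

lemma zeta_diff: "zeta n (a - b) = zeta n a * cnj (zeta n b)"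
  unfolding zeta_def cis_cnj cis_mult by (simp add: diff_divide_distrib right_diff_distrib)

lemma zeta_cnj_mult: "zeta n a * cnj (zeta n a) = 1"
proof -
  have "zeta n (a - a) = zeta n a * cnj (zeta n a)" by (rule zeta_diff)
  then show ?thesis by simp
qed

lemma zeta_multiple: "n > 0 \<Longrightarrow> zeta n (int n * k) = 1"
proof -
  assume "n > 0"
  then have "2 * pi * of_int (int n * k) / real n = 2 * pi * of_int k" by (simp add: field_simps)
  moreover have "cis (2 * pi * of_int k) = 1" by simp
  ultimately show ?thesis unfolding zeta_def by simp
qed

lemma zeta_cong: assumes "n > 0" "[a = b] (mod int n)" shows "zeta n a = zeta n b"
proof -
  have "int n dvd b - a" using assms(2) by (simp add: cong_iff_dvd_diff dvd_diff_commute)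
  then obtain k where "b - a = int n * k" by (rule dvdE)
  then have "b = a + int n * k" by simp
  then show ?thesis using zeta_multiple[OF assms(1)] by (simp add: zeta_add)
qed

lemma zeta_mod: "n > 0 \<Longrightarrow> zeta n (a mod int n) = zeta n a"
  by (rule zeta_cong) (auto simp: cong_def)

lemma zeta_pow: "zeta n (int t * e) = zeta n e ^ t"
proof -
  have "zeta n e ^ t = cis (real t * (2 * pi * of_int e / real n))" unfolding zeta_def by (rule Complex.DeMoivre)
  moreover have "2 * pi * of_int (int t * e) / real n = real t * (2 * pi * of_int e / real n)" by simp
  ultimately show ?thesis unfolding zeta_def by metis
qed

lemma zeta_eq_1: assumes "n > 0" "zeta n e = 1" shows "int n dvd e"
proof -
  have "cos (2 * pi * of_int e / real n) = 1"
    using assms(2) unfolding zeta_def by (metis cis.sel(1) one_complex.sel(1))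
  then obtain k :: int where k: "2 * pi * of_int e / real n = of_int k * 2 * pi"
    by (auto simp: cos_one_2pi_int)
  then have "real_of_int e = real n * of_int k" using assms(1) by (simp add: field_simps)
  then have "e = int n * k" by (metis of_int_eq_iff of_int_mult of_int_of_nat_eq)
  then show ?thesis by simp
qed

lemma zeta_geom:
  assumes "n > 0"
  shows "(\<Sum>t<n. zeta n (int t * e)) = (if int n dvd e then of_nat n else 0)"
proof (cases "int n dvd e")
  case True
  then have "zeta n (int t * e) = 1" for t
    using zeta_multiple[OF assms] by (metis dvdE mult.left_commute)
  then show ?thesis using True by simp
next
  case False
  then have ne: "zeta n e \<noteq> 1" using zeta_eq_1[OF assms] by blast
  have "zeta n e ^ n = 1" using zeta_pow[of n n e] zeta_multiple[OF assms] by simp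
  then show ?thesis using False ne by (simp add: zeta_pow geometric_sum)
qed

lemma orth1:
  assumes n: "n > 0" and fI: "finite I"
  shows "(\<Sum>r\<in>I \<rightarrow>\<^sub>E {..<n}. zeta n (\<Sum>i\<in>I. int (r i) * e i))
       = (if \<forall>i\<in>I. int n dvd e i then of_nat n ^ card I else 0)"
proof -
  have "(\<Sum>r\<in>I \<rightarrow>\<^sub>E {..<n}. zeta n (\<Sum>i\<in>I. int (r i) * e i))
      = (\<Sum>r\<in>I \<rightarrow>\<^sub>E {..<n}. \<Prod>i\<in>I. zeta n (int (r i) * e i))"
    by (simp add: zeta_sum)
  also have "\<dots> = (\<Prod>i\<in>I. \<Sum>t<n. zeta n (int t * e i))"
    by (rule prod_sum_PiE[symmetric]) (use fI in auto)
  also have "\<dots> = (\<Prod>i\<in>I. (if int n dvd e i then of_nat n else 0))"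
    using zeta_geom[OF n] by simp
  also have "\<dots> = (if \<forall>i\<in>I. int n dvd e i then of_nat n ^ card I else 0)"
    using fI by (auto simp: prod_zero)
  finally show ?thesis .
qed

lemma dvd_small_eq:
  fixes a b :: int
  assumes "a \<in> {0..<int n}" "b \<in> {0..<int n}" "int n dvd (a - b)"
  shows "a = b"
proof -
  have "[a = b] (mod int n)" using assms(3) by (simp add: cong_iff_dvd_diff dvd_diff_commute)
  then have "a mod int n = b mod int n" by (simp add: cong_def)
  then show ?thesis using assms(1,2) by simp
qed

lemma orth1':
  assumes n: "n > 0" and fI: "finite I"
    and s: "s \<in> I \<rightarrow>\<^sub>E {0..<int n}" and s': "s' \<in> I \<rightarrow>\<^sub>E {0..<int n}"
  shows "(\<Sum>r\<in>I \<rightarrow>\<^sub>E {..<n}. zeta n (\<Sum>i\<in>I. int (r i) * (s i - s' i)))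
       = (if s = s' then of_nat n ^ card I else 0)"
proof -
  have "(\<forall>i\<in>I. int n dvd (s i - s' i)) \<longleftrightarrow> s = s'"
  proof
    assume "\<forall>i\<in>I. int n dvd (s i - s' i)"
    then have "\<forall>i\<in>I. s i = s' i" using s s' dvd_small_eq by (metis PiE_mem)
    then show "s = s'" using s s' by (auto intro: PiE_ext)
  qed simp
  then show ?thesis using orth1[OF n fI, of "\<lambda>i. s i - s' i"] by simp
qed

lemma sum_fun_apply: "(\<Sum>w\<in>t. f w) r = (\<Sum>w\<in>t. f w r)"
proof (cases "finite t")
  case True then show ?thesis by (induction t rule: finite_induct) auto
qed simp

lemma decomp:
  fixes T :: "nat \<Rightarrow> nat \<Rightarrow> int"
  assumes fD: "finite D" and LD: "L \<subseteq> D"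
  shows "(\<Sum>a\<in>D. \<Sum>b\<in>D. int (glue L r1 c1 a) * T a b * int (glue L r2 c2 b))
    = (\<Sum>a\<in>L. \<Sum>b\<in>L. int (r1 a) * T a b * int (r2 b))
    + (\<Sum>a\<in>D - L. \<Sum>b\<in>D - L. int (c1 a) * T a b * int (c2 b))
    + (\<Sum>a\<in>L. int (r1 a) * (\<Sum>b\<in>D - L. T a b * int (c2 b)))
    - (\<Sum>b\<in>L. int (r2 b) * (\<Sum>a\<in>D - L. (- T a b) * int (c1 a)))"
proof -
  have fL: "finite L" using fD LD finite_subset by blast
  have fC: "finite (D - L)" using fD by simp
  have split: "(\<Sum>x\<in>D. h x) = (\<Sum>x\<in>L. h x) + (\<Sum>x\<in>D - L. h x)" for h :: "nat \<Rightarrow> int"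
    using sum.subset_diff[OF LD fD, of h] by (simp only: add.commute)
  have A: "(\<Sum>a\<in>D. \<Sum>b\<in>D. f a b) = (\<Sum>a\<in>L. \<Sum>b\<in>L. f a b) + (\<Sum>a\<in>L. \<Sum>b\<in>D - L. f a b)
     + ((\<Sum>a\<in>D - L. \<Sum>b\<in>L. f a b) + (\<Sum>a\<in>D - L. \<Sum>b\<in>D - L. f a b))" for f :: "nat \<Rightarrow> nat \<Rightarrow> int"
  proof -
    have "(\<Sum>a\<in>D. \<Sum>b\<in>D. f a b) = (\<Sum>a\<in>D. (\<Sum>b\<in>L. f a b) + (\<Sum>b\<in>D - L. f a b))"
      by (rule sum.cong[OF refl]) (rule split)
    also have "\<dots> = (\<Sum>a\<in>L. (\<Sum>b\<in>L. f a b) + (\<Sum>b\<in>D - L. f a b))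
        + (\<Sum>a\<in>D - L. (\<Sum>b\<in>L. f a b) + (\<Sum>b\<in>D - L. f a b))"
      by (rule split)
    also have "\<dots> = (\<Sum>a\<in>L. \<Sum>b\<in>L. f a b) + (\<Sum>a\<in>L. \<Sum>b\<in>D - L. f a b)
     + ((\<Sum>a\<in>D - L. \<Sum>b\<in>L. f a b) + (\<Sum>a\<in>D - L. \<Sum>b\<in>D - L. f a b))"
      by (simp only: sum.distrib)
    finally show ?thesis .
  qed
  have B1: "(\<Sum>a\<in>L. \<Sum>b\<in>L. int (glue L r1 c1 a) * T a b * int (glue L r2 c2 b))
     = (\<Sum>a\<in>L. \<Sum>b\<in>L. int (r1 a) * T a b * int (r2 b))"
    by (intro sum.cong refl) (simp add: glue_def)
  have B2: "(\<Sum>a\<in>L. \<Sum>b\<in>D - L. int (glue L r1 c1 a) * T a b * int (glue L r2 c2 b))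
     = (\<Sum>a\<in>L. int (r1 a) * (\<Sum>b\<in>D - L. T a b * int (c2 b)))"
  proof -
    have "(\<Sum>a\<in>L. \<Sum>b\<in>D - L. int (glue L r1 c1 a) * T a b * int (glue L r2 c2 b))
       = (\<Sum>a\<in>L. \<Sum>b\<in>D - L. int (r1 a) * (T a b * int (c2 b)))"
      by (intro sum.cong refl) (simp add: glue_def)
    then show ?thesis by (simp only: sum_distrib_left)
  qed
  have B3: "(\<Sum>a\<in>D - L. \<Sum>b\<in>L. int (glue L r1 c1 a) * T a b * int (glue L r2 c2 b))
     = - (\<Sum>b\<in>L. int (r2 b) * (\<Sum>a\<in>D - L. (- T a b) * int (c1 a)))"
  proof -
    have "(\<Sum>a\<in>D - L. \<Sum>b\<in>L. int (glue L r1 c1 a) * T a b * int (glue L r2 c2 b))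
       = (\<Sum>a\<in>D - L. \<Sum>b\<in>L. - (int (r2 b) * ((- T a b) * int (c1 a))))"
      by (intro sum.cong refl) (simp add: glue_def)
    also have "\<dots> = (\<Sum>b\<in>L. \<Sum>a\<in>D - L. - (int (r2 b) * ((- T a b) * int (c1 a))))"
      by (rule sum.swap)
    also have "\<dots> = - (\<Sum>b\<in>L. int (r2 b) * (\<Sum>a\<in>D - L. (- T a b) * int (c1 a)))"
      by (simp only: sum_negf sum_distrib_left)
    finally show ?thesis .
  qed
  have B4: "(\<Sum>a\<in>D - L. \<Sum>b\<in>D - L. int (glue L r1 c1 a) * T a b * int (glue L r2 c2 b))
     = (\<Sum>a\<in>D - L. \<Sum>b\<in>D - L. int (c1 a) * T a b * int (c2 b))"
    by (intro sum.cong refl) (simp add: glue_def)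
  show ?thesis unfolding A B1 B2 B3 B4 by simp
qed


lemma WT_zeta:
  assumes "n > 0"
  shows "W_T n d T i j = zeta n (\<Sum>a<d. \<Sum>b<d. int (i a) * T a b * int (j b))"
proof -
  define E where "E = (\<Sum>a<d. \<Sum>b<d. int (i a) * T a b * int (j b))"
  have "W_T n d T i j = cis (2 * pi / real n) ^ nat (E mod int n)"
    unfolding W_T_def E_def ..
  also have "\<dots> = cis (real (nat (E mod int n)) * (2 * pi / real n))" by (rule Complex.DeMoivre)
  also have "real (nat (E mod int n)) = of_int (E mod int n)" using assms by simp
  also have "of_int (E mod int n) * (2 * pi / real n) = 2 * pi * of_int (E mod int n) / real n" by simp
  also have "cis \<dots> = zeta n (E mod int n)" unfolding zeta_def ..
  also have "\<dots> = zeta n E" using assms by (rule zeta_mod)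
  finally show ?thesis unfolding E_def .
qed

theorem proposition6p10:
  fixes d n :: nat and T :: "nat \<Rightarrow> nat \<Rightarrow> int" and L :: "nat set"
  assumes "even d" and "prime n" and "n > 2 * d"
    and "cauchy_matrix n d T"
    and "L \<subseteq> {0..<d}"
  shows "mat_rank (tuple_pairs n L) (tuple_pairs n ({0..<d} - L)) (W_resh n d T L)
           = n ^ (2 * min (card L) (d - card L))"
proof -
  have p: "prime n" by fact
  have n0: "n > 0" using p prime_gt_0_nat by blast
  obtain x y :: "nat \<Rightarrow> int" where
    xy: "\<forall>a<d. x a \<in> {0..<int n} \<and> y a \<in> {0..<int n}"
    and xi: "inj_on x {0..<d}" and yi: "inj_on y {0..<d}"
    and Tc: "\<forall>a<d. \<forall>b<d. T a b \<in> {0..<int n} \<and> [T a b * (x a - y b) = 1] (mod int n)"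
    using assms(4) unfolding cauchy_matrix_def by blast
  define Lc where "Lc = {0..<d} - L"
  define k where "k = card L"
  have LD: "L \<subseteq> {0..<d}" by fact
  have fL: "finite L" using LD finite_subset by blast
  have fLc: "finite Lc" unfolding Lc_def by simp
  have cLc: "card Lc = d - k" unfolding Lc_def k_def using LD fL by (simp add: card_Diff_subset)
  have injc: "\<forall>a\<in>S. \<forall>a'\<in>S. [f a = f a'] (mod int n) \<longrightarrow> a = a'"
    if "S \<subseteq> {0..<d}" "inj_on f {0..<d}" "\<forall>a<d. f a \<in> {0..<int n}" for S f
  proof (intro ballI impI)
    fix a a' assume a: "a \<in> S" "a' \<in> S" and c: "[f a = f a'] (mod int n)"
    then have "f a mod int n = f a' mod int n" by (simp add: cong_def)
    moreover have "a < d" "a' < d" using a that(1) by auto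
    ultimately have "f a = f a'" using that(3) by simp
    then show "a = a'" using that(1,2) a by (meson inj_onD subsetD)
  qed
  have xy': "\<forall>a<d. x a \<in> {0..<int n}" "\<forall>a<d. y a \<in> {0..<int n}" using xy by auto
  have LcD: "Lc \<subseteq> {0..<d}" unfolding Lc_def by auto
  note xL = injc[OF LD xi xy'(1)] and yL = injc[OF LD yi xy'(2)]
  note xLc = injc[OF LcD xi xy'(1)] and yLc = injc[OF LcD yi xy'(2)]
  define F1 where "F1 = (\<lambda>c::nat\<Rightarrow>nat. restrict (\<lambda>a. (\<Sum>b\<in>Lc. T a b * int (c b)) mod int n) L)"
  define F2 where "F2 = (\<lambda>c::nat\<Rightarrow>nat. restrict (\<lambda>b. (\<Sum>a\<in>Lc. - T a b * int (c a)) mod int n) L)"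
  have Tc': "[T a b * (x a - y b) = 1] (mod int n)" if "a \<in> L \<or> a \<in> Lc" "b \<in> L \<or> b \<in> Lc" for a b
  proof -
    have "a < d" "b < d" using that LD LcD by auto
    then show ?thesis using Tc by blast
  qed
  have G1: "\<forall>a\<in>L. \<forall>b\<in>Lc. [T a b * (x a - y b) = 1] (mod int n)"
    using Tc' by blast
  have G2: "\<forall>b\<in>L. \<forall>a\<in>Lc. [- T a b * (y b - x a) = 1] (mod int n)"
  proof (intro ballI)
    fix b a assume "b \<in> L" "a \<in> Lc"
    then have "[T a b * (x a - y b) = 1] (mod int n)" using Tc' by blast
    moreover have "- T a b * (y b - x a) = T a b * (x a - y b)" by (simp add: algebra_simps)
    ultimately show "[- T a b * (y b - x a) = 1] (mod int n)" by simp
  qed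
  have card1: "card (F1 ` (Lc \<rightarrow>\<^sub>E {..<n})) = n ^ min k (d - k)"
    using image_card[OF p fL fLc xL yLc G1] unfolding F1_def k_def cLc[unfolded k_def] .
  have card2: "card (F2 ` (Lc \<rightarrow>\<^sub>E {..<n})) = n ^ min k (d - k)"
    using image_card[OF p fL fLc yL xLc G2] unfolding F2_def k_def cLc[unfolded k_def] .
  define RI where "RI = tuple_pairs n L"
  define CI where "CI = tuple_pairs n Lc"
  define A where "A = L \<rightarrow>\<^sub>E {..<n}"
  define Q where "Q r = (\<Sum>a\<in>L. \<Sum>b\<in>L. int (fst r a) * T a b * int (snd r b))" for r :: "(nat \<Rightarrow> nat) \<times> (nat \<Rightarrow> nat)"
  define P where "P c = (\<Sum>a\<in>Lc. \<Sum>b\<in>Lc. int (fst c a) * T a b * int (snd c b))" for c :: "(nat \<Rightarrow> nat) \<times> (nat \<Rightarrow> nat)"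
  define sc where "sc c = (F1 (snd c), F2 (fst c))" for c :: "(nat \<Rightarrow> nat) \<times> (nat \<Rightarrow> nat)"
  define pair where "pair r s = (\<Sum>a\<in>L. int (fst r a) * fst s a) - (\<Sum>b\<in>L. int (snd r b) * snd s b)"
    for r :: "(nat \<Rightarrow> nat) \<times> (nat \<Rightarrow> nat)" and s :: "(nat \<Rightarrow> int) \<times> (nat \<Rightarrow> int)"
  define vs where "vs s = (\<lambda>r. if r \<in> RI then zeta n (Q r) * zeta n (pair r s) else 0)" for s
  define col where "col c = (\<lambda>r. if r \<in> RI then W_resh n d T L r c else 0)" for c
  have key1: "W_resh n d T L r c = zeta n (P c) * (zeta n (Q r) * zeta n (pair r (sc c)))" for r c
  proof -
    define U where "U a = (\<Sum>b\<in>Lc. T a b * int (snd c b))" for a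
    define V where "V b = (\<Sum>a\<in>Lc. - T a b * int (fst c a))" for b
    have dd: "{..<d} = {0..<d}" by auto
    have "W_resh n d T L r c = zeta n (\<Sum>a\<in>{0..<d}. \<Sum>b\<in>{0..<d}.
        int (glue L (fst r) (fst c) a) * T a b * int (glue L (snd r) (snd c) b))"
      unfolding W_resh_def WT_zeta[OF n0] dd ..
    also have "(\<Sum>a\<in>{0..<d}. \<Sum>b\<in>{0..<d}.
        int (glue L (fst r) (fst c) a) * T a b * int (glue L (snd r) (snd c) b))
      = Q r + P c + ((\<Sum>a\<in>L. int (fst r a) * U a) - (\<Sum>b\<in>L. int (snd r b) * V b))"
      unfolding decomp[OF finite_atLeastLessThan LD] Q_def P_def U_def V_def Lc_def by simp
    also have "zeta n \<dots> = zeta n (Q r) * zeta n (P c) * zeta n ((\<Sum>a\<in>L. int (fst r a) * U a) - (\<Sum>b\<in>L. int (snd r b) * V b))"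
      by (simp only: zeta_add)
    also have "zeta n ((\<Sum>a\<in>L. int (fst r a) * U a) - (\<Sum>b\<in>L. int (snd r b) * V b)) = zeta n (pair r (sc c))"
    proof (rule zeta_cong[OF n0])
      have "[(\<Sum>a\<in>L. int (fst r a) * U a) - (\<Sum>b\<in>L. int (snd r b) * V b)
         = (\<Sum>a\<in>L. int (fst r a) * (U a mod int n)) - (\<Sum>b\<in>L. int (snd r b) * (V b mod int n))] (mod int n)"
        by (intro cong_diff cong_sum cong_mult cong_refl) (auto simp: cong_def)
      moreover have "(\<Sum>a\<in>L. int (fst r a) * (U a mod int n)) = (\<Sum>a\<in>L. int (fst r a) * fst (sc c) a)"
        by (intro sum.cong refl) (simp add: sc_def F1_def U_def)
      moreover have "(\<Sum>b\<in>L. int (snd r b) * (V b mod int n)) = (\<Sum>b\<in>L. int (snd r b) * snd (sc c) b)"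
        by (intro sum.cong refl) (simp add: sc_def F2_def V_def)
      ultimately show "[(\<Sum>a\<in>L. int (fst r a) * U a) - (\<Sum>b\<in>L. int (snd r b) * V b) = pair r (sc c)] (mod int n)"
        unfolding pair_def by simp
    qed
    finally show ?thesis by (simp add: mult_ac)
  qed
  define SS where "SS = (L \<rightarrow>\<^sub>E {0..<int n}) \<times> (L \<rightarrow>\<^sub>E {0..<int n})"
  define Im where "Im = sc ` CI"
  have RI_eq: "RI = (L \<rightarrow>\<^sub>E {..<n}) \<times> (L \<rightarrow>\<^sub>E {..<n})" unfolding RI_def tuple_pairs_def ..
  have Im_eq: "Im = F1 ` (Lc \<rightarrow>\<^sub>E {..<n}) \<times> F2 ` (Lc \<rightarrow>\<^sub>E {..<n})"
  proof
    show "Im \<subseteq> F1 ` (Lc \<rightarrow>\<^sub>E {..<n}) \<times> F2 ` (Lc \<rightarrow>\<^sub>E {..<n})"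
      unfolding Im_def CI_def tuple_pairs_def sc_def by auto
    show "F1 ` (Lc \<rightarrow>\<^sub>E {..<n}) \<times> F2 ` (Lc \<rightarrow>\<^sub>E {..<n}) \<subseteq> Im"
    proof
      fix z assume "z \<in> F1 ` (Lc \<rightarrow>\<^sub>E {..<n}) \<times> F2 ` (Lc \<rightarrow>\<^sub>E {..<n})"
      then obtain c1 c2 where c: "c1 \<in> Lc \<rightarrow>\<^sub>E {..<n}" "c2 \<in> Lc \<rightarrow>\<^sub>E {..<n}" "z = (F1 c2, F2 c1)"
        by blast
      then have "z = sc (c1, c2)" "(c1, c2) \<in> CI" unfolding sc_def CI_def tuple_pairs_def by auto
      then show "z \<in> Im" unfolding Im_def by blast
    qed
  qed
  have cardIm: "card Im = n ^ (2 * min k (d - k))"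
    unfolding Im_eq card_cartesian_product card1 card2 by (simp add: power_add mult_2)
  have ImSS: "Im \<subseteq> SS"
    unfolding Im_eq SS_def F1_def F2_def using n0 by (auto simp: PiE_def extensional_def)
  define N :: complex where "N = of_nat n ^ (2 * k)"
  have N0: "N \<noteq> 0" unfolding N_def using n0 by simp
  have ip: "(\<Sum>r\<in>RI. vs s r * cnj (vs s' r)) = (if s = s' then N else 0)" if s: "s \<in> SS" "s' \<in> SS" for s s'
  proof -
    define X1 where "X1 r1 = (\<Sum>a\<in>L. int (r1 a) * (fst s a - fst s' a))" for r1 :: "nat \<Rightarrow> nat"
    define X2 where "X2 r2 = (\<Sum>a\<in>L. int (r2 a) * (snd s' a - snd s a))" for r2 :: "nat \<Rightarrow> nat"
    have "(\<Sum>r\<in>RI. vs s r * cnj (vs s' r)) = (\<Sum>r\<in>RI. zeta n (X1 (fst r)) * zeta n (X2 (snd r)))"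
    proof (rule sum.cong[OF refl])
      fix r assume r: "r \<in> RI"
      have "vs s r * cnj (vs s' r) = (zeta n (Q r) * cnj (zeta n (Q r))) * zeta n (pair r s - pair r s')"
        using r unfolding vs_def zeta_diff by (simp add: mult_ac)
      also have "\<dots> = zeta n (pair r s - pair r s')" by (simp add: zeta_cnj_mult)
      also have "pair r s - pair r s' = X1 (fst r) + X2 (snd r)"
        unfolding pair_def X1_def X2_def by (simp add: algebra_simps sum_subtractf)
      finally show "vs s r * cnj (vs s' r) = zeta n (X1 (fst r)) * zeta n (X2 (snd r))"
        by (simp add: zeta_add)
    qed
    also have "\<dots> = (\<Sum>r1\<in>L \<rightarrow>\<^sub>E {..<n}. zeta n (X1 r1)) * (\<Sum>r2\<in>L \<rightarrow>\<^sub>E {..<n}. zeta n (X2 r2))"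
      unfolding RI_eq sum_product sum.cartesian_product by (simp add: case_prod_beta)
    also have "(\<Sum>r1\<in>L \<rightarrow>\<^sub>E {..<n}. zeta n (X1 r1)) = (if fst s = fst s' then of_nat n ^ k else 0)"
      unfolding X1_def k_def using s unfolding SS_def by (intro orth1'[OF n0 fL]) auto
    also have "(\<Sum>r2\<in>L \<rightarrow>\<^sub>E {..<n}. zeta n (X2 r2)) = (if snd s' = snd s then of_nat n ^ k else 0)"
      unfolding X2_def k_def using s unfolding SS_def by (intro orth1'[OF n0 fL]) auto
    finally show ?thesis unfolding N_def by (auto simp: prod_eq_iff power_add mult_2)
  qed
  have vs_inj: "inj_on vs Im"
  proof (rule inj_onI)
    fix s s' assume s: "s \<in> Im" "s' \<in> Im" and e: "vs s = vs s'"
    have sS: "s \<in> SS" "s' \<in> SS" using s ImSS by auto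
    have "(\<Sum>r\<in>RI. vs s r * cnj (vs s r)) = N" using ip[OF sS(1) sS(1)] by simp
    then have N1: "(\<Sum>r\<in>RI. vs s r * cnj (vs s' r)) = N" using e by simp
    have I: "(\<Sum>r\<in>RI. vs s r * cnj (vs s' r)) = (if s = s' then N else 0)" by (rule ip[OF sS])
    show "s = s'"
    proof (rule ccontr)
      assume "s \<noteq> s'"
      then show False using I N1 N0 by simp
    qed
  qed
  interpret V: vector_space "\<lambda>(s::complex) (f::(nat \<Rightarrow> nat) \<times> (nat \<Rightarrow> nat) \<Rightarrow> complex). \<lambda>r. s * f r"
    by unfold_locales (auto simp: fun_eq_iff algebra_simps plus_fun_def)
  have indep: "V.independent (vs ` Im)"
    unfolding V.independent_explicit_module
  proof (intro allI impI)
    fix t u v0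
    assume ft: "finite t" and tsub: "t \<subseteq> vs ` Im" and sum0: "(\<Sum>w\<in>t. (\<lambda>r. u w * w r)) = 0" and v0: "v0 \<in> t"
    obtain s0 where s0: "s0 \<in> Im" "v0 = vs s0" using v0 tsub by blast
    have z: "(\<Sum>w\<in>t. u w * w r) = 0" for r
      using fun_cong[OF sum0, of r] by (simp add: sum_fun_apply)
    have ipw: "(\<Sum>r\<in>RI. w r * cnj (v0 r)) = (if w = v0 then N else 0)" if wt: "w \<in> t" for w
    proof -
      obtain sw where sw: "sw \<in> Im" "w = vs sw" using wt tsub by blast
      have "(\<Sum>r\<in>RI. w r * cnj (v0 r)) = (if sw = s0 then N else 0)"
        unfolding sw(2) s0(2) using ip sw(1) s0(1) ImSS by blast
      moreover have "(sw = s0) \<longleftrightarrow> (w = v0)"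
        using vs_inj sw s0 by (auto dest: inj_onD)
      ultimately show ?thesis by simp
    qed
    have "0 = (\<Sum>r\<in>RI. (\<Sum>w\<in>t. u w * w r) * cnj (v0 r))" by (simp add: z)
    also have "\<dots> = (\<Sum>w\<in>t. u w * (\<Sum>r\<in>RI. w r * cnj (v0 r)))"
      by (simp add: sum_distrib_left sum_distrib_right mult_ac sum.swap[of _ RI])
    also have "\<dots> = (\<Sum>w\<in>t. if w = v0 then u w * N else 0)"
      by (rule sum.cong[OF refl]) (simp add: ipw)
    also have "\<dots> = u v0 * N" using ft v0 by (simp add: sum.delta)
    finally show "u v0 = 0" using N0 by simp
  qed
  have colsc: "col c = (\<lambda>r. zeta n (P c) * vs (sc c) r)" for c
    unfolding col_def vs_def by (auto simp: key1 fun_eq_iff)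
  have vscol: "vs (sc c) = (\<lambda>r. cnj (zeta n (P c)) * col c r)" for c
    unfolding colsc by (auto simp: fun_eq_iff zeta_cnj_mult mult.assoc[symmetric] mult.commute[of "cnj _"])
  have span_eq: "V.span (col ` CI) = V.span (vs ` Im)"
    unfolding V.span_eq
  proof
    show "col ` CI \<subseteq> V.span (vs ` Im)"
    proof
      fix w assume "w \<in> col ` CI"
      then obtain c where c: "c \<in> CI" "w = col c" by blast
      have "vs (sc c) \<in> V.span (vs ` Im)" using c(1) unfolding Im_def by (intro V.span_base) blast
      then have "(\<lambda>r. zeta n (P c) * vs (sc c) r) \<in> V.span (vs ` Im)" by (rule V.span_scale)
      then show "w \<in> V.span (vs ` Im)" using c colsc by simp
    qed
    show "vs ` Im \<subseteq> V.span (col ` CI)"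
    proof
      fix w assume "w \<in> vs ` Im"
      then obtain c where c: "c \<in> CI" "w = vs (sc c)" unfolding Im_def by blast
      have "col c \<in> V.span (col ` CI)" using c(1) by (intro V.span_base) blast
      then have "(\<lambda>r. cnj (zeta n (P c)) * col c r) \<in> V.span (col ` CI)" by (rule V.span_scale)
      then show "w \<in> V.span (col ` CI)" using c vscol by simp
    qed
  qed
  have "mat_rank (tuple_pairs n L) (tuple_pairs n ({0..<d} - L)) (W_resh n d T L) = V.dim (col ` CI)"
    unfolding mat_rank_def col_def RI_def CI_def Lc_def ..
  also have "\<dots> = V.dim (vs ` Im)" using span_eq by (rule V.span_eq_dim)
  also have "\<dots> = card (vs ` Im)" using indep by (rule V.dim_eq_card_independent)
  also have "\<dots> = card Im" using vs_inj by (rule card_image)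
  finally show ?thesis unfolding cardIm k_def .
qed

end
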